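(* Let $d\in\mathbb{N}$, $0<A\le1$, and let $f$ be a measurable function on $[0,1]^d$. Then $$\|f\|^{(1)}_{2,A}\le\|f\|_{2,A}\le4\,\|f\|^{(1)}_{2,A},$$ where $\|f\|^{(1)}_{2,A}=\sup_{0<t<1}\frac{f^*(t)}{\sqrt{A\log(1/t)+1}}$ and $\|f\|_{2,A}=\inf\{\lambda>0:\int_{[0,1]^d}\Phi_{2,A}(|f(x)|/\lambda)\,dx\le1\}$.
   Context: $\Phi_{2,A}(u)=u^2$ for $0\le u\le1$ and $\Phi_{2,A}(u)=\exp\big((u^2-1)/A\big)$ for $u>1$. $f^*(t)=\inf\{s\ge0:|\{x\in[0,1]^d:|f(x)|>s\}|\le t\}$ is the non-increasing rearrangement of $f$ with respect to Lebesgue measure. *)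

theory Defs
  imports "HOL-Analysis.Analysis"
begin

definition Phi2 :: "real \<Rightarrow> real \<Rightarrow> real" where
  "Phi2 A u = (if u \<le> 1 then u\<^sup>2 else exp ((u\<^sup>2 - 1) / A))"

text \<open>Non-increasing rearrangement of f on the unit cube [0,1]^d = cbox 0 One,
  with respect to Lebesgue measure (extended-real valued).\<close>
definition rearr :: "('a::euclidean_space \<Rightarrow> real) \<Rightarrow> real \<Rightarrow> ereal" where
  "rearr f t = Inf (ereal ` {s::real. 0 \<le> s \<and>
      emeasure lebesgue {x \<in> cbox (0::'a) One. \<bar>f x\<bar> > s} \<le> ennreal t})"

definition norm1 :: "real \<Rightarrow> ('a::euclidean_space \<Rightarrow> real) \<Rightarrow> ereal" where
  "norm1 A f = (SUP t\<in>{0<..<1::real}. rearr f t / ereal (sqrt (A * ln (1 / t) + 1)))"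

text \<open>The Orlicz (Luxemburg) norm ||f||_{2,A}; infinite if no lambda qualifies.\<close>
definition orlicz_norm :: "real \<Rightarrow> ('a::euclidean_space \<Rightarrow> real) \<Rightarrow> ereal" where
  "orlicz_norm A f = Inf (ereal ` {l::real. 0 < l \<and>
      (\<integral>\<^sup>+ x. ennreal (Phi2 A (\<bar>f x\<bar> / l)) \<partial>(lebesgue_on (cbox (0::'a) One))) \<le> 1})"

end

theory Submission
  imports Defs
begin

lemma C1: "emeasure (lebesgue_on (cbox (0::'a::euclidean_space) One)) (cbox 0 One) = 1"
  apply (subst emeasure_restrict_space) apply auto
  done

lemma sup1: fixes f :: "nat \<Rightarrow> ennreal" shows "f j \<le> suminf f"
  using sum_le_suminf[of f "{j}"] by (simp add: summableI)

lemma Phi_mono: "0 < A \<Longrightarrow> 0 \<le> u \<Longrightarrow> u \<le> v \<Longrightarrow> Phi2 A u \<le> Phi2 A v"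
  unfolding Phi2_def
  apply (auto intro!: power_mono divide_right_mono)
  by (smt (verit, best) divide_nonneg_pos exp_mono exp_zero one_power2 power2_le_imp_le)

lemma Phi_nonneg: "0 \<le> Phi2 A u"
  unfolding Phi2_def by auto

lemma Phi_meas[measurable]:
  assumes [measurable]: "g \<in> borel_measurable M"
  shows "(\<lambda>x. Phi2 A (g x)) \<in> borel_measurable M"
  unfolding Phi2_def by measurable

lemma exp3: "(13::real) \<le> exp 3"
proof -
  have "1 + 3/2 + (3/2)\<^sup>2/2 \<le> exp (3/2::real)"
    by (rule exp_lower_Taylor_quadratic) simp
  hence "(29/8::real) \<le> exp (3/2)" by (simp add: power2_eq_square)
  hence "(29/8::real) * (29/8) \<le> exp (3/2) * exp (3/2)" by (intro mult_mono) auto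
  also have "\<dots> = exp 3" by (simp flip: exp_add)
  finally show ?thesis by simp
qed
lemma exp2: "(5::real) \<le> exp 2"
proof -
  have "1 + 2 + (2::real)\<^sup>2/2 \<le> exp 2"
    by (rule exp_lower_Taylor_quadratic) simp
  thus ?thesis by simp
qed
lemma key_real:
  assumes A: "0 < A" "A \<le> 1"
  shows "Phi2 A ((real j+3)/4) * (if j=0 then 1 else exp (-(((real j+1)^2-1)/A))) \<le> 9/16*(1/5)^j"
proof (cases "j \<le> 1")
  case True
  then consider "j = 0" | "j = 1" by linarith
  then show ?thesis
  proof cases
    case 1 then show ?thesis by (simp add: Phi2_def power2_eq_square)
  next
    case 2
    have "exp (-(3/A)) \<le> exp (-3)" using A by (auto simp: field_simps)
    also have "exp (-3) = 1 / exp (3::real)" by (simp add: exp_minus field_simps)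
    also have "\<dots> \<le> 1/13" using exp3 by (simp add: divide_simps)
    finally show ?thesis using 2 by (simp add: Phi2_def)
  qed
next
  case False
  hence j2: "real j \<ge> 2" by simp
  have gt: "(real j + 3)/4 > 1" using j2 by simp
  define X where "X = ((real j+3)/4)^2 - (real j+1)^2"
  have X: "X \<le> - (2 * real j + 1)" proof -
    have "2 * (real j * 15) \<le> real j * (real j * 15)" using mult_right_mono[OF j2, of "real j * 15"] by simp
    hence "9 + real j * 6 \<le> real j * (real j * 15)" using j2 by linarith
    thus ?thesis unfolding X_def by (simp add: power2_eq_square field_simps)
  qed
  have "Phi2 A ((real j+3)/4) * exp (-(((real j+1)^2-1)/A)) = exp (X / A)"
    using gt unfolding Phi2_def X_def by (simp add: diff_divide_distrib flip: exp_add)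
  also have "\<dots> \<le> exp X"
  proof -
    have "X \<le> 0" using X j2 by simp
    have "X * 1 \<le> X * A" using A \<open>X \<le> 0\<close> by (intro mult_left_mono_neg) auto
    hence "X / A \<le> X" using A by (simp add: divide_le_eq)
    thus ?thesis by simp
  qed
  also have "\<dots> \<le> exp (- (2 * real j + 1))" using X by simp
  also have "\<dots> = 1 / (exp 1 * exp 2 ^ j)"
    by (simp add: exp_minus exp_add[symmetric] exp_of_nat_mult[symmetric] field_simps)
  also have "\<dots> \<le> 1 / (2 * 5 ^ j)"
    apply (intro divide_left_mono mult_mono power_mono exp2)
    using exp_ge_add_one_self[of 1] by auto
  also have "\<dots> \<le> 9/16*(1/5)^j" by (simp add: field_simps)
  finally show ?thesis using False by simp
qed

theorem theorem4p9:
  fixes f :: "'a::euclidean_space \<Rightarrow> real" and A :: real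
  assumes "0 < A" and "A \<le> 1"
    and "f \<in> borel_measurable (lebesgue_on (cbox (0::'a) One))"
  shows "norm1 A f \<le> orlicz_norm A f \<and> orlicz_norm A f \<le> 4 * norm1 A f"
proof -
  define C where "C = cbox (0::'a) One"
  define M where "M = lebesgue_on C"
  have spM: "space M = C" by (simp add: M_def)
  have fm[measurable]: "f \<in> borel_measurable M" using assms(3) by (simp add: M_def C_def)
  have Cleb: "C \<in> sets lebesgue" by (simp add: C_def)
  have MC: "emeasure M C = 1" using C1 by (simp add: M_def C_def)
  have setsgt: "{x\<in>C. s < \<bar>f x\<bar>} \<in> sets M" for s
  proof -
    have "{x\<in>space M. s < \<bar>f x\<bar>} \<in> sets M" by measurable
    thus ?thesis using spM by simp
  qed
  have leb_M: "emeasure lebesgue {x\<in>C. s < \<bar>f x\<bar>} = emeasure M {x\<in>C. s < \<bar>f x\<bar>}" for s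
    unfolding M_def by (subst emeasure_restrict_space) (auto simp: Cleb)
  have rearr_eq: "rearr f t = Inf (ereal ` {s. 0 \<le> s \<and> emeasure M {x\<in>C. s < \<bar>f x\<bar>} \<le> ennreal t})" for t
    unfolding rearr_def C_def[symmetric] leb_M ..
  have intM: "lebesgue_on (cbox (0::'a) One) = M" by (simp add: M_def C_def)
  have P1: "norm1 A f \<le> orlicz_norm A f"
    unfolding orlicz_norm_def
  proof (rule Inf_greatest, clarify)
    fix l assume l: "0 < l" and int: "(\<integral>\<^sup>+ x. ennreal (Phi2 A (\<bar>f x\<bar> / l)) \<partial>(lebesgue_on (cbox (0::'a) One))) \<le> 1"
    show "norm1 A f \<le> ereal l" unfolding norm1_def
    proof (rule SUP_least)
      fix t :: real assume t: "t \<in> {0<..<1}"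
      define q where "q = sqrt (A * ln (1/t) + 1)"
      have lnpos: "ln (1/t) > 0" using t by simp
      have q1: "q > 1" using assms lnpos by (simp add: q_def)
      have qsq: "q^2 = A * ln(1/t) + 1" using assms lnpos by (simp add: q_def)
      have Phiq: "exp ((q^2 - 1)/A) = 1/t" using qsq assms t by simp
      have meas_le: "emeasure M {x\<in>C. l*q < \<bar>f x\<bar>} \<le> ennreal t"
      proof -
        have "emeasure M {x\<in>C. l*q < \<bar>f x\<bar>} = (\<integral>\<^sup>+x. indicator {x\<in>C. l*q < \<bar>f x\<bar>} x \<partial>M)"
          by (simp add: setsgt)
        also have "\<dots> \<le> (\<integral>\<^sup>+x. ennreal t * ennreal (Phi2 A (\<bar>f x\<bar>/l)) \<partial>M)"
        proof (rule nn_integral_mono)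
          fix x assume x: "x \<in> space M"
          show "indicator {x\<in>C. l*q < \<bar>f x\<bar>} x \<le> ennreal t * ennreal (Phi2 A (\<bar>f x\<bar>/l))"
          proof (cases "l*q < \<bar>f x\<bar>")
            case True
            have gq: "\<bar>f x\<bar>/l > q" using True l by (simp add: field_simps)
            hence "Phi2 A (\<bar>f x\<bar>/l) = exp (((\<bar>f x\<bar>/l)^2 - 1)/A)" using q1 by (simp add: Phi2_def)
            also have "\<dots> \<ge> exp ((q^2-1)/A)"
              using gq q1 assms by (auto intro!: divide_right_mono power_mono)
            finally have "Phi2 A (\<bar>f x\<bar>/l) \<ge> 1/t" using Phiq by simp
            hence ge1: "t * Phi2 A (\<bar>f x\<bar>/l) \<ge> 1" using t by (simp add: field_simps)
            have "ennreal t * ennreal (Phi2 A (\<bar>f x\<bar>/l)) = ennreal (t * Phi2 A (\<bar>f x\<bar>/l))"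
              using t Phi_nonneg by (simp add: ennreal_mult)
            also have "\<dots> \<ge> 1" using ge1 by (simp add: ennreal_leI)
            finally show ?thesis using True x spM by (simp add: indicator_def)
          qed (simp add: indicator_def)
        qed
        also have "\<dots> = ennreal t * (\<integral>\<^sup>+x. ennreal (Phi2 A (\<bar>f x\<bar>/l)) \<partial>M)"
          by (rule nn_integral_cmult) measurable
        also have "\<dots> \<le> ennreal t * 1" using int intM by (intro mult_left_mono) auto
        finally show ?thesis by simp
      qed
      have "rearr f t \<le> ereal (l*q)" unfolding rearr_eq
        by (intro Inf_lower imageI) (use meas_le l q1 in auto)
      then show "rearr f t / ereal (sqrt (A * ln (1 / t) + 1)) \<le> ereal l"
        unfolding q_def[symmetric] using q1 by (subst ereal_divide_le_pos) (auto simp: mult.commute)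
    qed
  qed
  have rpos: "0 \<le> rearr f t" for t unfolding rearr_def by (rule Inf_greatest) auto
  have N0: "0 \<le> norm1 A f" unfolding norm1_def
  proof (rule SUP_upper2[of "1/2"])
    show "0 \<le> rearr f (1/2) / ereal (sqrt (A * ln (1 / (1/2)) + 1))"
    proof (intro zero_le_divide_ereal rpos)
      have "0 \<le> A * ln 2" using assms by simp
      thus "0 \<le> ereal (sqrt (A * ln (1 / (1/2)) + 1))" by simp
    qed
  qed simp
  have P2: "orlicz_norm A f \<le> 4 * norm1 A f"
  proof (cases "norm1 A f = \<infinity>")
    case True then show ?thesis by simp
  next
    case False
    with N0 obtain N where N: "norm1 A f = ereal N" "0 \<le> N" by (cases "norm1 A f") auto
    show ?thesis unfolding N(1)
    proof (rule ereal_le_epsilon2)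
      fix e :: real assume e: "0 < e"
      define n where "n = N + e/4"
      have n: "0 < n" using N e by (simp add: n_def)
      have rb: "rearr f t \<le> ereal (n * sqrt (A*ln(1/t)+1))" if t: "t \<in> {0<..<1}" for t
      proof -
        have "0 < ln (1/t)" using t by simp
        hence "0 \<le> A * ln (1/t)" using assms by simp
        hence sp: "sqrt (A*ln(1/t)+1) > 0" by simp
        have "rearr f t / ereal (sqrt (A*ln(1/t)+1)) \<le> norm1 A f" unfolding norm1_def
          using t by (rule SUP_upper)
        also have "\<dots> \<le> ereal n" using N n_def e by simp
        finally show ?thesis using sp by (subst (asm) ereal_divide_le_pos) (auto simp: mult.commute)
      qed
      have tail: "emeasure M {x\<in>C. s < \<bar>f x\<bar>} \<le> ennreal (exp (-((u^2-1)/A)))" if u: "1 < u" "n*u < s" for u s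
      proof -
        define t where "t = exp(-((u^2-1)/A))"
        have u2: "u^2 > 1" using u by (simp add: one_less_power)
        have t01: "t \<in> {0<..<1}" using u2 assms by (simp add: t_def)
        have "1/t = exp ((u^2-1)/A)" unfolding t_def exp_minus by (metis inverse_eq_divide inverse_inverse_eq)
        hence "ln (1/t) = (u^2-1)/A" by simp
        hence "A*ln(1/t)+1 = u^2" using assms by simp
        hence "sqrt (A*ln(1/t)+1) = u" using u by simp
        hence "rearr f t < ereal s" using rb[OF t01] u(2) by (simp add: order.strict_trans1)
        then obtain s0 where s0: "emeasure M {x\<in>C. s0 < \<bar>f x\<bar>} \<le> ennreal t" "s0 < s"
          unfolding rearr_eq Inf_less_iff by auto
        have "emeasure M {x\<in>C. s < \<bar>f x\<bar>} \<le> emeasure M {x\<in>C. s0 < \<bar>f x\<bar>}"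
          by (rule emeasure_mono) (use s0 setsgt in auto)
        then show ?thesis using s0 by (simp add: t_def)
      qed
      have mono1: "emeasure M {x\<in>C. s < \<bar>f x\<bar>} \<le> 1" for s
      proof -
        have "emeasure M {x\<in>C. s < \<bar>f x\<bar>} \<le> emeasure M C"
          by (rule emeasure_mono) (auto simp flip: spM)
        thus ?thesis using MC by simp
      qed
      define S where "S j = {x\<in>C. n*(real j+2) < \<bar>f x\<bar> \<and> \<bar>f x\<bar> \<le> n*(real j+3)}" for j::nat
      define c where "c j = Phi2 A ((real j+3)/4)" for j::nat
      have S_sets[measurable]: "S j \<in> sets M" for j
      proof -
        have "{x\<in>space M. n*(real j+2) < \<bar>f x\<bar> \<and> \<bar>f x\<bar> \<le> n*(real j+3)} \<in> sets M" by measurable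
        thus ?thesis using spM by (simp add: S_def)
      qed
      have Sle: "emeasure M (S j) \<le> ennreal (if j=0 then 1 else exp(-(((real j+1)^2-1)/A)))" for j
      proof -
        have "emeasure M (S j) \<le> emeasure M {x\<in>C. n*(real j+2) < \<bar>f x\<bar>}"
          by (rule emeasure_mono) (auto simp: S_def setsgt)
        also have "\<dots> \<le> ennreal (if j=0 then 1 else exp(-(((real j+1)^2-1)/A)))"
        proof (cases "j=0")
          case True then show ?thesis using mono1 by simp
        next
          case False
          have "n*(real j+1) < n*(real j+2)" using n by simp
          with False show ?thesis using tail[of "real j+1" "n*(real j+2)"] by simp
        qed
        finally show ?thesis .
      qed
      have pw: "ennreal (Phi2 A (\<bar>f x\<bar>/(4*n))) \<le> ennreal (1/4) + (\<Sum>j. ennreal (c j) * indicator (S j) x)"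
        if x: "x \<in> space M" for x
      proof (cases "\<bar>f x\<bar> \<le> 2*n")
        case True
        have v: "\<bar>f x\<bar>/(4*n) \<le> 1/2" using True n by (simp add: field_simps)
        have "Phi2 A (\<bar>f x\<bar>/(4*n)) = (\<bar>f x\<bar>/(4*n))^2" using v by (simp add: Phi2_def)
        also have "\<dots> \<le> (1/2)^2" using v n by (intro power_mono) auto
        finally have "ennreal (Phi2 A (\<bar>f x\<bar>/(4*n))) \<le> ennreal (1/4)"
          by (intro ennreal_leI) (simp add: power2_eq_square)
        then show ?thesis by (intro add_increasing2) auto
      next
        case False
        define g where "g = \<bar>f x\<bar>/n"
        have g2: "g > 2" using False n by (simp add: g_def field_simps)
        define j where "j = nat (\<lceil>g\<rceil> - 3)"
        have c3: "\<lceil>g\<rceil> \<ge> 3" using g2 by linarith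
        have jr: "real j = real_of_int \<lceil>g\<rceil> - 3" using c3 by (simp add: j_def)
        have gj: "real j + 2 < g" "g \<le> real j + 3" using ceiling_correct[of g] jr by auto
        have xS: "x \<in> S j"
          using gj x spM n unfolding S_def g_def by (auto simp: field_simps)
        have "Phi2 A (\<bar>f x\<bar>/(4*n)) \<le> c j" unfolding c_def
          using gj n assms by (intro Phi_mono) (auto simp: g_def field_simps)
        hence "ennreal (Phi2 A (\<bar>f x\<bar>/(4*n))) \<le> ennreal (c j) * indicator (S j) x"
          using xS by (simp add: ennreal_leI)
        also have "\<dots> \<le> (\<Sum>j. ennreal (c j) * indicator (S j) x)" by (rule sup1)
        also have "\<dots> \<le> ennreal (1/4) + (\<Sum>j. ennreal (c j) * indicator (S j) x)" by simp
        finally show ?thesis .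
      qed
      have "(\<integral>\<^sup>+x. ennreal (Phi2 A (\<bar>f x\<bar>/(4*n))) \<partial>M)
          \<le> (\<integral>\<^sup>+x. ennreal (1/4) + (\<Sum>j. ennreal (c j) * indicator (S j) x) \<partial>M)"
        by (rule nn_integral_mono) (rule pw)
      also have "\<dots> = (\<integral>\<^sup>+x. ennreal (1/4) \<partial>M) + (\<integral>\<^sup>+x. (\<Sum>j. ennreal (c j) * indicator (S j) x) \<partial>M)"
        by (rule nn_integral_add) measurable
      also have "\<dots> = ennreal (1/4) * emeasure M (space M) + (\<Sum>j. ennreal (c j) * emeasure M (S j))"
        by (subst nn_integral_suminf) (auto simp: nn_integral_cmult_indicator)
      also have "\<dots> \<le> ennreal (1/4) * 1 + (\<Sum>j. ennreal (9/16*(1/5)^j))"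
      proof (rule add_mono)
        show "ennreal (1/4) * emeasure M (space M) \<le> ennreal (1/4) * 1" using spM MC by simp
        show "(\<Sum>j. ennreal (c j) * emeasure M (S j)) \<le> (\<Sum>j. ennreal (9/16*(1/5)^j))"
        proof (rule suminf_le)
          fix j
          have "ennreal (c j) * emeasure M (S j) \<le> ennreal (c j) * ennreal (if j=0 then 1 else exp(-(((real j+1)^2-1)/A)))"
            by (intro mult_left_mono Sle) auto
          also have "\<dots> = ennreal (c j * (if j=0 then 1 else exp(-(((real j+1)^2-1)/A))))"
            using Phi_nonneg by (simp add: ennreal_mult c_def)
          also have "\<dots> \<le> ennreal (9/16*(1/5)^j)"
            unfolding c_def by (intro ennreal_leI key_real assms)
          finally show "ennreal (c j) * emeasure M (S j) \<le> ennreal (9/16*(1/5)^j)" .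
        qed (auto simp: summableI)
      qed
      also have "(\<Sum>j. ennreal (9/16*(1/5::real)^j)) = ennreal (45/64)"
      proof (rule suminf_ennreal_eq)
        have "(\<lambda>j. (1/5::real)^j) sums (1 / (1 - 1/5))" by (rule geometric_sums) simp
        from sums_mult[OF this, of "9/16"] show "(\<lambda>j. 9/16*(1/5::real)^j) sums (45/64)" by simp
      qed simp
      also have "ennreal (1/4) * 1 + ennreal (45/64) = ennreal (61/64)"
        by (simp flip: ennreal_plus)
      also have "\<dots> \<le> 1" by simp
      finally have int1: "(\<integral>\<^sup>+x. ennreal (Phi2 A (\<bar>f x\<bar>/(4*n))) \<partial>M) \<le> 1" .
      have "orlicz_norm A f \<le> ereal (4*n)" unfolding orlicz_norm_def
        by (intro Inf_lower imageI) (use int1 n intM in auto)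
      also have "ereal (4*n) = 4 * ereal N + ereal e" by (simp add: n_def algebra_simps)
      finally show "orlicz_norm A f \<le> 4 * ereal N + ereal e" .
    qed
  qed
  show ?thesis using P1 P2 by simp
qed

end
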